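(* Let $n\ge4$ and $r\le n$. Let $\hat{\mathbf A}\in\mathbb R^{p\times r}$ and an orthogonal $\hat{\mathbf P}\in\mathbb R^{r\times r}$ be random with $(\hat{\mathbf A},\hat{\mathbf P})$ independent of $\{\omega_{ij}:i\in\mathcal N_2,j\in[p]\}$, and set $\mathbf A^*=\mathbf V_r^*\hat{\mathbf P}$, $\boldsymbol\Theta^*=\mathbf U_r^*\mathbf D_r^*\hat{\mathbf P}$. If $\|\hat{\mathbf A}\|_{2\to\infty}\le C_2$, $\|\mathbf V_r^*\|_{2\to\infty}\le C_2$ and $\|\mathbf U_r^*\mathbf D_r^*\|_{2\to\infty}\le C_1$, then with probability at least $1-1/(nr)$, $$\max_{i\in\mathcal N_2}\|\mathbf B_{1,i}(\hat{\mathbf A})\|\le\kappa_2^*\pi_{\max}C_1\|\hat{\mathbf A}\|_2\|\hat{\mathbf A}-\mathbf A^*\|_F+64\log(n)\big(\pi_{\max}^{1/2}\kappa_2^*C_1C_2\|\hat{\mathbf A}-\mathbf A^*\|_F+\kappa_2^*C_1C_2^2\big).$$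
   Context: $b:\mathbb R\to\mathbb R$ is twice continuously differentiable with $b''>0$. $\mathbf M^*=(m^*_{ij})\in\mathbb R^{n\times p}$ is deterministic of rank $r$ with compact SVD $\mathbf U_r^*\mathbf D_r^*(\mathbf V_r^* )^T$ ($\mathbf U_r^*,\mathbf V_r^*$ with orthonormal columns, $\mathbf D_r^*$ diagonal with positive singular values). The $\omega_{ij}\in\{0,1\}$ are independent Bernoulli$(\pi_{ij})$, $\pi_{\max}=\max\pi_{ij}$. $\mathcal N_2\subset[n]$ is fixed. $\rho=\|\mathbf M^*\|_{\max}=\max|m^*_{ij}|$, $\kappa_2(\alpha)=\sup_{|x|\le\alpha}b''(x)$, $\kappa_2^*=\kappa_2(2\rho+1)$. With $\hat{\mathbf a}_j^T,\mathbf a_j^{*T},\boldsymbol\theta_i^{*T}$ the rows of $\hat{\mathbf A},\mathbf A^*,\boldsymbol\Theta^*$: $\mathbf B_{1,i}(\hat{\mathbf A})=\sum_{j=1}^p\omega_{ij}b''(m^*_{ij})\hat{\mathbf a}_j(\hat{\mathbf a}_j-\mathbf a_j^* )^T\boldsymbol\theta_i^*$. $\|\cdot\|_2$ spectral, $\|\cdot\|_F$ Frobenius, $\|X\|_{2\to\infty}$ maximal row Euclidean norm. *)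

theory Defs
  imports "HOL-Probability.Probability"
begin

text \<open>Matrices are rendered as real^'c^'r (rows indexed by 'r, columns by 'c).\<close>

definition norm_2inf :: "real^'c^'r \<Rightarrow> real" where
  "norm_2inf A = Max (range (\<lambda>j. norm (A $ j)))"

definition norm_F :: "real^'c^'r \<Rightarrow> real" where
  "norm_F A = sqrt (\<Sum>i\<in>UNIV. \<Sum>j\<in>UNIV. (A $ i $ j)^2)"

definition norm_spec :: "real^'c^'r \<Rightarrow> real" where
  "norm_spec A = onorm (\<lambda>v. A *v v)"

definition norm_max :: "real^'c^'r \<Rightarrow> real" where
  "norm_max A = Max (range (\<lambda>(i,j). \<bar>A $ i $ j\<bar>))"

text \<open>kappa_2(alpha) = sup over |x| <= alpha of b''(x); b2 stands for b''.\<close>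
definition kappa2 :: "(real \<Rightarrow> real) \<Rightarrow> real \<Rightarrow> real" where
  "kappa2 b2 \<alpha> = Sup (b2 ` {x. \<bar>x\<bar> \<le> \<alpha>})"

text \<open>B_{1,i}(Ahat) = sum_j om_ij b''(m*_ij) ahat_j (ahat_j - a*_j)^T theta*_i,
  given the realisation om of the omega's.\<close>
definition B1 :: "(real \<Rightarrow> real) \<Rightarrow> real^'p^'n \<Rightarrow> ('n \<Rightarrow> 'p \<Rightarrow> real)
    \<Rightarrow> real^'r^'p \<Rightarrow> real^'r^'p \<Rightarrow> real^'r^'n \<Rightarrow> 'n \<Rightarrow> real^'r" where
  "B1 b2 Mst om Ah Ast Th i =
     (\<Sum>j\<in>UNIV. (om i j * b2 (Mst $ i $ j) * ((Ah $ j - Ast $ j) \<bullet> (Th $ i))) *\<^sub>R (Ah $ j))"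

end

theory Submission
  imports Defs
begin


definition wt :: "real \<Rightarrow> real \<Rightarrow> real" where
  "wt p v = (if v = 1 then p else 1 - p)"

definition EB :: "'s set \<Rightarrow> ('s \<Rightarrow> real) \<Rightarrow> (('s \<Rightarrow> real) \<Rightarrow> real) \<Rightarrow> real" where
  "EB S p h = (\<Sum>c\<in>PiE S (\<lambda>_. {0,1}). (\<Prod>s\<in>S. wt (p s) (c s)) * h c)"

lemma Ex_empty: "EB {} p h = h (\<lambda>_. undefined)"
  by (simp add: EB_def)

lemma Ex_insert:
  assumes "finite S" "s \<notin> S"
  shows "EB (insert s S) p h = (1 - p s) * EB S p (\<lambda>g. h (g(s:=0))) + p s * EB S p (\<lambda>g. h (g(s:=1)))"
proof -
  let ?F = "\<lambda>_::'a. {0::real,1}"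
  let ?\<phi> = "\<lambda>c. (\<Prod>t\<in>insert s S. wt (p t) (c t)) * h c"
  have "EB (insert s S) p h = (\<Sum>c\<in>PiE (insert s S) ?F. ?\<phi> c)" by (simp add: EB_def)
  also have "\<dots> = (\<Sum>(y,g)\<in>?F s \<times> PiE S ?F. ?\<phi> (g(s:=y)))"
  proof (rule sum.reindex_bij_witness[of _ "\<lambda>(y,g). g(s := y)" "\<lambda>g. (g s, g(s := undefined))"])
    fix c assume c: "c \<in> PiE (insert s S) ?F"
    show "(case (c s, c(s := undefined)) of (y, g) \<Rightarrow> g(s := y)) = c" by simp
    show "(c s, c(s := undefined)) \<in> ?F s \<times> PiE S ?F"
      using c assms by (auto simp: PiE_def extensional_def Pi_iff)
    show "(case (c s, c(s := undefined)) of (y, g) \<Rightarrow> ?\<phi> (g(s := y))) = ?\<phi> c"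
      by (simp del: fun_upd_apply)
  next
    fix b assume b: "b \<in> ?F s \<times> PiE S ?F"
    then obtain y g where bb: "b = (y,g)" "y \<in> ?F s" "g \<in> PiE S ?F" by auto
    have gs: "g s = undefined" using bb(3) assms(2) by (auto simp: PiE_def extensional_def)
    show "((case b of (y, g) \<Rightarrow> g(s := y)) s, (case b of (y, g) \<Rightarrow> g(s := y))(s := undefined)) = b"
      using bb gs by (auto simp: fun_eq_iff)
    show "(case b of (y, g) \<Rightarrow> g(s := y)) \<in> PiE (insert s S) ?F"
      using bb by (auto intro!: PiE_fun_upd)
  qed
  also have "\<dots> = (\<Sum>(y,g)\<in>?F s \<times> PiE S ?F. wt (p s) y * ((\<Prod>t\<in>S. wt (p t) (g t)) * h (g(s:=y))))"
  proof (intro sum.cong refl, clarify)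
    fix y g
    have "(\<Prod>t\<in>S. wt (p t) ((g(s:=y)) t)) = (\<Prod>t\<in>S. wt (p t) (g t))"
      using assms by (intro prod.cong) auto
    then show "?\<phi> (g(s:=y)) = wt (p s) y * ((\<Prod>t\<in>S. wt (p t) (g t)) * h (g(s:=y)))"
      using assms by simp
  qed
  also have "\<dots> = (\<Sum>y\<in>?F s. \<Sum>g\<in>PiE S ?F. wt (p s) y * ((\<Prod>t\<in>S. wt (p t) (g t)) * h (g(s:=y))))"
    by (subst sum.cartesian_product) auto
  also have "\<dots> = (\<Sum>y\<in>?F s. wt (p s) y * EB S p (\<lambda>g. h (g(s:=y))))"
    by (simp add: EB_def sum_distrib_left)
  also have "\<dots> = (1 - p s) * EB S p (\<lambda>g. h (g(s:=0))) + p s * EB S p (\<lambda>g. h (g(s:=1)))"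
    by (simp add: wt_def)
  finally show ?thesis .
qed

lemma Ex_add: "EB S p (\<lambda>c. f c + g c) = EB S p f + EB S p g"
  by (simp add: EB_def distrib_left sum.distrib)

lemma Ex_cmult: "EB S p (\<lambda>c. a * f c) = a * EB S p f"
  by (simp add: EB_def sum_distrib_left mult.left_commute)

lemma Ex_diff: "EB S p (\<lambda>c. f c - g c) = EB S p f - EB S p g"
  by (simp add: EB_def right_diff_distrib sum_subtractf)

lemma Ex_one: "finite S \<Longrightarrow> EB S p (\<lambda>_. 1) = 1"
proof (induction S rule: finite_induct)
  case empty then show ?case by (simp add: Ex_empty)
next
  case (insert s S) then show ?case by (simp add: Ex_insert algebra_simps)
qed

lemma Ex_const: "finite S \<Longrightarrow> EB S p (\<lambda>_. b) = b"
  using Ex_cmult[of S p b "\<lambda>_. 1"] Ex_one[of S p] by simp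

lemma wt_nonneg: "0 \<le> p \<Longrightarrow> p \<le> 1 \<Longrightarrow> 0 \<le> wt p v"
  by (simp add: wt_def)

lemma Ex_mono:
  assumes "\<forall>s\<in>S. 0 \<le> p s \<and> p s \<le> 1" "\<And>c. c \<in> PiE S (\<lambda>_. {0,1}) \<Longrightarrow> f c \<le> g c"
  shows "EB S p f \<le> EB S p g"
  unfolding EB_def using assms
  by (intro sum_mono mult_left_mono prod_nonneg) (auto intro: wt_nonneg)

lemma Ex_abs:
  assumes "\<forall>s\<in>S. 0 \<le> p s \<and> p s \<le> 1"
  shows "\<bar>EB S p f\<bar> \<le> EB S p (\<lambda>c. \<bar>f c\<bar>)"
proof -
  have "\<bar>EB S p f\<bar> \<le> (\<Sum>c\<in>PiE S (\<lambda>_. {0,1}). \<bar>(\<Prod>s\<in>S. wt (p s) (c s)) * f c\<bar>)"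
    unfolding EB_def by (rule sum_abs)
  also have "\<dots> = EB S p (\<lambda>c. \<bar>f c\<bar>)"
    unfolding EB_def using assms
    by (intro sum.cong refl) (simp add: abs_mult abs_of_nonneg prod_nonneg wt_nonneg)
  finally show ?thesis .
qed


lemma exp_le_quad:
  fixes u :: real
  assumes "\<bar>u\<bar> \<le> 1"
  shows "exp u \<le> 1 + u + u^2"
proof (cases "u \<ge> 0")
  case True then show ?thesis using exp_bound[of u] assms by simp
next
  case False
  define v where "v = -u"
  have v: "0 < v" "v \<le> 1" using False assms by (auto simp: v_def)
  have "1 + v \<le> exp v" using exp_ge_add_one_self[of v] by simp
  then have "exp u \<le> 1 / (1 + v)" using v
    by (simp add: v_def exp_minus field_simps)
  also have "\<dots> \<le> 1 - v + v^2"
  proof -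
    have "1 \<le> (1 - v + v^2) * (1 + v)" using v by (simp add: algebra_simps power2_eq_square power3_eq_cube)
    then show ?thesis using v by (simp add: field_simps)
  qed
  finally show ?thesis by (simp add: v_def)
qed

lemma two_point:
  fixes p l \<delta> :: real
  assumes "0 \<le> p" "p \<le> 1" "\<bar>l * \<delta>\<bar> \<le> 1"
  shows "(1 - p) * exp (l * (- p * \<delta>)) + p * exp (l * ((1 - p) * \<delta>)) \<le> exp (l^2 * p * \<delta>^2)"
proof -
  have a0: "\<bar>l * (- p * \<delta>)\<bar> \<le> 1"
  proof -
    have "\<bar>l * (- p * \<delta>)\<bar> = p * \<bar>l * \<delta>\<bar>" using assms by (simp add: abs_mult)
    also have "\<dots> \<le> 1 * 1" using assms by (intro mult_mono) auto
    finally show ?thesis by simp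
  qed
  have a1: "\<bar>l * ((1 - p) * \<delta>)\<bar> \<le> 1"
  proof -
    have "\<bar>l * ((1 - p) * \<delta>)\<bar> = (1 - p) * \<bar>l * \<delta>\<bar>" using assms by (simp add: abs_mult)
    also have "\<dots> \<le> 1 * 1" using assms by (intro mult_mono) auto
    finally show ?thesis by simp
  qed
  have "(1 - p) * exp (l * (- p * \<delta>)) + p * exp (l * ((1 - p) * \<delta>))
     \<le> (1 - p) * (1 + l * (- p * \<delta>) + (l * (- p * \<delta>))^2) + p * (1 + l * ((1 - p) * \<delta>) + (l * ((1 - p) * \<delta>))^2)"
    using assms exp_le_quad[OF a0] exp_le_quad[OF a1]
    by (intro add_mono mult_left_mono) auto
  also have "\<dots> = 1 + l^2 * \<delta>^2 * (p * (1 - p))"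
    by (simp add: algebra_simps power2_eq_square)
  also have "\<dots> \<le> 1 + l^2 * p * \<delta>^2"
  proof -
    have "l^2 * \<delta>^2 * (p * (1 - p)) \<le> l^2 * \<delta>^2 * p"
      using assms by (intro mult_left_mono) (auto simp: algebra_simps)
    then show ?thesis by (simp add: algebra_simps)
  qed
  also have "\<dots> \<le> exp (l^2 * p * \<delta>^2)" using exp_ge_add_one_self[of "l^2 * p * \<delta>^2"] by simp
  finally show ?thesis .
qed

lemma mgf_bound:
  fixes h :: "('s \<Rightarrow> real) \<Rightarrow> real"
  assumes "finite S" "\<forall>s\<in>S. 0 \<le> p s \<and> p s \<le> 1" "0 \<le> l"
    "\<forall>s\<in>S. 0 \<le> d s \<and> l * d s \<le> 1"
    "\<forall>s\<in>S. \<forall>g. \<bar>h (g(s:=1)) - h (g(s:=0))\<bar> \<le> d s"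
  shows "EB S p (\<lambda>c. exp (l * (h c - EB S p h))) \<le> exp (l^2 * (\<Sum>s\<in>S. p s * (d s)^2))"
  using assms
proof (induction S arbitrary: h rule: finite_induct)
  case empty then show ?case by (simp add: Ex_empty)
next
  case (insert s S h)
  define h0 where "h0 = (\<lambda>g. h (g(s:=0)))"
  define h1 where "h1 = (\<lambda>g. h (g(s:=1)))"
  define m0 where "m0 = EB S p h0"
  define m1 where "m1 = EB S p h1"
  define ps where "ps = p s"
  define V where "V = (\<Sum>s\<in>S. p s * (d s)^2)"
  have ps: "0 \<le> ps" "ps \<le> 1" using insert.prems by (auto simp: ps_def)
  have pS: "\<forall>s\<in>S. 0 \<le> p s \<and> p s \<le> 1" using insert.prems by auto
  have \<mu>: "EB (insert s S) p h = (1 - ps) * m0 + ps * m1"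
    using insert.hyps by (simp add: Ex_insert ps_def m0_def m1_def h0_def h1_def)
  define \<mu> where "\<mu> = (1 - ps) * m0 + ps * m1"
  have key: "EB S p (\<lambda>g. exp (l * (hy g - \<mu>))) \<le> exp (l * (EB S p hy - \<mu>)) * exp (l^2 * V)"
    if hy: "hy = h0 \<or> hy = h1" for hy
  proof -
    have bd: "\<forall>t\<in>S. \<forall>g. \<bar>hy (g(t:=1)) - hy (g(t:=0))\<bar> \<le> d t"
    proof (intro ballI allI)
      fix t g assume t: "t \<in> S"
      then have ts: "t \<noteq> s" using insert.hyps by auto
      show "\<bar>hy (g(t:=1)) - hy (g(t:=0))\<bar> \<le> d t"
        using hy insert.prems(4)[rule_format, of t] t ts
        by (auto simp: h0_def h1_def fun_upd_twist)
    qed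
    have "EB S p (\<lambda>g. exp (l * (hy g - \<mu>))) = EB S p (\<lambda>g. exp (l * (EB S p hy - \<mu>)) * exp (l * (hy g - EB S p hy)))"
      by (simp add: exp_add[symmetric] algebra_simps)
    also have "\<dots> = exp (l * (EB S p hy - \<mu>)) * EB S p (\<lambda>g. exp (l * (hy g - EB S p hy)))"
      by (rule Ex_cmult)
    also have "\<dots> \<le> exp (l * (EB S p hy - \<mu>)) * exp (l^2 * V)"
      unfolding V_def
    proof (intro mult_left_mono)
      have d': "\<forall>t\<in>S. 0 \<le> d t \<and> l * d t \<le> 1" using insert.prems(3) by auto
      show "EB S p (\<lambda>g. exp (l * (hy g - EB S p hy))) \<le> exp (l\<^sup>2 * (\<Sum>s\<in>S. p s * (d s)\<^sup>2))"
        by (rule insert.IH[OF pS insert.prems(2) d' bd])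
    qed simp
    finally show ?thesis .
  qed
  have d: "\<bar>m1 - m0\<bar> \<le> d s"
  proof -
    have "\<bar>m1 - m0\<bar> = \<bar>EB S p (\<lambda>g. h1 g - h0 g)\<bar>" by (simp add: Ex_diff m0_def m1_def)
    also have "\<dots> \<le> EB S p (\<lambda>g. \<bar>h1 g - h0 g\<bar>)" using pS by (rule Ex_abs)
    also have "\<dots> \<le> EB S p (\<lambda>g. d s)"
      using pS insert.prems(4) by (intro Ex_mono) (auto simp: h0_def h1_def fun_upd_def)
    also have "\<dots> = d s" using insert.hyps by (simp add: Ex_const)
    finally show ?thesis .
  qed
  have "EB (insert s S) p (\<lambda>c. exp (l * (h c - EB (insert s S) p h)))
      = (1 - ps) * EB S p (\<lambda>g. exp (l * (h0 g - \<mu>))) + ps * EB S p (\<lambda>g. exp (l * (h1 g - \<mu>)))"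
    using insert.hyps by (simp add: Ex_insert \<mu> \<mu>_def ps_def h0_def h1_def)
  also have "\<dots> \<le> (1 - ps) * (exp (l * (m0 - \<mu>)) * exp (l^2 * V)) + ps * (exp (l * (m1 - \<mu>)) * exp (l^2 * V))"
    using key[of h0] key[of h1] ps by (intro add_mono mult_left_mono) (auto simp: m0_def m1_def)
  also have "\<dots> = ((1 - ps) * exp (l * (- ps * (m1 - m0))) + ps * exp (l * ((1 - ps) * (m1 - m0)))) * exp (l^2 * V)"
    by (simp add: \<mu>_def algebra_simps)
  also have "\<dots> \<le> exp (l^2 * ps * (m1 - m0)^2) * exp (l^2 * V)"
  proof (intro mult_right_mono two_point ps)
    have "\<bar>l * (m1 - m0)\<bar> = l * \<bar>m1 - m0\<bar>" using insert.prems by (simp add: abs_mult)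
    also have "\<dots> \<le> l * d s" using d insert.prems by (intro mult_left_mono) auto
    also have "\<dots> \<le> 1" using insert.prems by auto
    finally show "\<bar>l * (m1 - m0)\<bar> \<le> 1" .
  qed auto
  also have "\<dots> \<le> exp (l^2 * ps * (d s)^2) * exp (l^2 * V)"
  proof -
    have "(m1 - m0)^2 \<le> (d s)^2" using d by (metis abs_le_square_iff abs_of_nonneg abs_ge_zero order_trans)
    then have "l^2 * ps * (m1 - m0)^2 \<le> l^2 * ps * (d s)^2" using ps by (intro mult_left_mono) auto
    then show ?thesis by (intro mult_right_mono) auto
  qed
  also have "\<dots> = exp (l^2 * (\<Sum>s\<in>insert s S. p s * (d s)^2))"
    using insert.hyps by (simp add: V_def ps_def exp_add[symmetric] algebra_simps)
  finally show ?case .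
qed


lemma sum_upd_split:
  fixes a :: "'s \<Rightarrow> 'v::real_vector"
  assumes "finite S" "s \<notin> S"
  shows "(\<Sum>t\<in>insert s S. ((g(s:=y)) t - p t) *\<^sub>R a t) = (y - p s) *\<^sub>R a s + (\<Sum>t\<in>S. (g t - p t) *\<^sub>R a t)"
proof -
  have "(\<Sum>t\<in>S. ((g(s:=y)) t - p t) *\<^sub>R a t) = (\<Sum>t\<in>S. (g t - p t) *\<^sub>R a t)"
    using assms by (intro sum.cong) auto
  then show ?thesis using assms by simp
qed

lemma norm_sq_expand:
  fixes x a :: "'v::real_inner"
  shows "(norm (x + k *\<^sub>R a))^2 = (norm x)^2 + 2 * k * (x \<bullet> a) + k^2 * (norm a)^2"
  by (simp add: power2_norm_eq_inner inner_add_left inner_add_right inner_commute algebra_simps power2_eq_square[of k])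

lemma second_moment:
  fixes a :: "'s \<Rightarrow> 'v::real_inner"
  assumes "finite S"
  shows "EB S p (\<lambda>c. (norm (x + (\<Sum>s\<in>S. (c s - p s) *\<^sub>R a s)))^2)
       = (norm x)^2 + (\<Sum>s\<in>S. p s * (1 - p s) * (norm (a s))^2)"
  using assms
proof (induction S arbitrary: x rule: finite_induct)
  case empty then show ?case by (simp add: Ex_empty)
next
  case (insert s S x)
  define V where "V = (\<Sum>s\<in>S. p s * (1 - p s) * (norm (a s))^2)"
  have "EB (insert s S) p (\<lambda>c. (norm (x + (\<Sum>s\<in>insert s S. (c s - p s) *\<^sub>R a s)))^2)
    = (1 - p s) * EB S p (\<lambda>g. (norm ((x + (0 - p s) *\<^sub>R a s) + (\<Sum>t\<in>S. (g t - p t) *\<^sub>R a t)))^2)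
      + p s * EB S p (\<lambda>g. (norm ((x + (1 - p s) *\<^sub>R a s) + (\<Sum>t\<in>S. (g t - p t) *\<^sub>R a t)))^2)"
  proof -
    have eq: "\<And>g y. x + (\<Sum>t\<in>insert s S. ((g(s:=y)) t - p t) *\<^sub>R a t) = (x + (y - p s) *\<^sub>R a s) + (\<Sum>t\<in>S. (g t - p t) *\<^sub>R a t)"
      by (simp only: sum_upd_split[OF insert.hyps] add.assoc)
    show ?thesis by (simp only: Ex_insert[OF insert.hyps] eq)
  qed
  also have "\<dots> = (1 - p s) * ((norm (x + (0 - p s) *\<^sub>R a s))^2 + V) + p s * ((norm (x + (1 - p s) *\<^sub>R a s))^2 + V)"
    by (simp add: insert.IH V_def)
  also have "\<dots> = (norm x)^2 + (p s * (1 - p s) * (norm (a s))^2 + V)"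
    unfolding norm_sq_expand by (simp add: algebra_simps power2_eq_square)
  also have "\<dots> = (norm x)^2 + (\<Sum>s\<in>insert s S. p s * (1 - p s) * (norm (a s))^2)"
    using insert.hyps by (simp add: V_def)
  finally show ?case .
qed


lemma Ex_nonneg:
  assumes "\<forall>s\<in>S. 0 \<le> p s \<and> p s \<le> 1" "finite S" "\<And>c. 0 \<le> f c"
  shows "0 \<le> EB S p f"
  using Ex_mono[OF assms(1), of "\<lambda>_. 0" f] assms Ex_const[OF assms(2), of p 0] by auto

lemma Ex_sq_le:
  assumes "\<forall>s\<in>S. 0 \<le> p s \<and> p s \<le> 1" "finite S"
  shows "(EB S p f)^2 \<le> EB S p (\<lambda>c. (f c)^2)"
proof -
  define m where "m = EB S p f"
  have "0 \<le> EB S p (\<lambda>c. (f c - m)^2)" by (rule Ex_nonneg[OF assms]) simp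
  also have "EB S p (\<lambda>c. (f c - m)^2) = EB S p (\<lambda>c. (f c)^2 + (-2 * m) * f c + m^2)"
    by (simp add: power2_eq_square algebra_simps)
  also have "\<dots> = EB S p (\<lambda>c. (f c)^2) + (-2 * m) * m + m^2"
    by (simp only: Ex_add Ex_cmult Ex_const[OF assms(2)] m_def)
  also have "\<dots> = EB S p (\<lambda>c. (f c)^2) - m^2"
    by (simp add: power2_eq_square)
  finally show ?thesis by (simp add: m_def)
qed

lemma final_num:
  fixes N :: real
  assumes "4 \<le> N"
  shows "exp (2 - 32 * ln N) \<le> 1 / N^3"
proof -
  have N0: "0 < N" using assms by simp
  have e: "exp (32 * ln N) = N^32"
    using exp_of_nat_mult[of 32 "ln N"] N0 by simp
  have "exp (2 - 32 * ln N) = exp 2 / N^32" by (simp add: exp_diff e)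
  also have "\<dots> \<le> 1 / N^3"
  proof -
    have "exp (2::real) = (exp 1)^2" by (simp add: exp_of_nat_mult[of 2 1, symmetric])
    also have "\<dots> \<le> 3^2" using exp_le by (intro power_mono) auto
    also have "(3::real)^2 \<le> N^2" using assms by (intro power_mono) auto
    also have "N^2 \<le> N^29" using assms by (intro power_increasing) auto
    finally have "exp 2 \<le> N^29" .
    then have "exp 2 * N^3 \<le> N^29 * N^3" using N0 by (intro mult_right_mono) auto
    also have "\<dots> = N^32" by (simp add: power_add[symmetric])
    finally show ?thesis using N0 by (simp add: field_simps)
  qed
  finally show ?thesis .
qed

lemma tail_bound:
  fixes a :: "'s \<Rightarrow> 'v::real_inner"
  assumes S: "finite S" and p: "\<forall>s\<in>S. 0 \<le> p s \<and> p s \<le> 1"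
    and aL: "\<forall>s\<in>S. norm (a s) \<le> L" and aV: "(\<Sum>s\<in>S. p s * (norm (a s))^2) \<le> \<sigma>^2"
    and \<sigma>: "0 \<le> \<sigma>" and L: "0 \<le> L" and N: "4 \<le> N"
  shows "EB S p (\<lambda>c. if 64 * ln N * (\<sigma> + L/2) < norm (\<Sum>s\<in>S. (c s - p s) *\<^sub>R a s) then 1 else 0) \<le> 1 / N^3"
proof -
  define h where "h = (\<lambda>c. norm (\<Sum>s\<in>S. (c s - p s) *\<^sub>R a s))"
  define T where "T = 64 * ln N * (\<sigma> + L/2)"
  have lnN: "1 \<le> ln N"
  proof -
    have "exp 1 \<le> N" using exp_le N by simp
    then show ?thesis using N by (simp add: ln_ge_iff)
  qed
  show ?thesis
  proof (cases "\<sigma> + L = 0")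
    case True
    then have z: "\<sigma> = 0" "L = 0" using \<sigma> L by auto
    then have "\<forall>s\<in>S. a s = 0" using aL by auto
    then have "\<And>c. (\<Sum>s\<in>S. (c s - p s) *\<^sub>R a s) = 0" by simp
    then have "EB S p (\<lambda>c. if 64 * ln N * (\<sigma> + L/2) < norm (\<Sum>s\<in>S. (c s - p s) *\<^sub>R a s) then 1 else 0) = EB S p (\<lambda>c. 0)"
      using z by simp
    also have "\<dots> = 0" using Ex_const[OF S, of p 0] by simp
    finally show ?thesis using N by simp
  next
    case False
    then have pos: "0 < \<sigma> + L" using \<sigma> L by auto
    define l where "l = 1 / (\<sigma> + L)"
    have l: "0 < l" using pos by (simp add: l_def)
    have bd: "\<forall>s\<in>S. \<forall>g. \<bar>h (g(s:=1)) - h (g(s:=0))\<bar> \<le> norm (a s)"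
    proof (intro ballI allI)
      fix s g assume s: "s \<in> S"
      have ins: "S = insert s (S - {s})" using s by auto
      have fin: "finite (S - {s})" "s \<notin> S - {s}" using S by auto
      have e: "\<And>y. (\<Sum>t\<in>S. ((g(s:=y)) t - p t) *\<^sub>R a t) = (y - p s) *\<^sub>R a s + (\<Sum>t\<in>S - {s}. (g t - p t) *\<^sub>R a t)"
        by (subst ins, rule sum_upd_split[OF fin])
      have "\<bar>h (g(s:=1)) - h (g(s:=0))\<bar> \<le> norm ((\<Sum>t\<in>S. ((g(s:=1)) t - p t) *\<^sub>R a t) - (\<Sum>t\<in>S. ((g(s:=0)) t - p t) *\<^sub>R a t))"
        unfolding h_def by (rule norm_triangle_ineq3)
      also have "\<dots> = norm (a s)" unfolding e by (simp add: algebra_simps)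
      finally show "\<bar>h (g(s:=1)) - h (g(s:=0))\<bar> \<le> norm (a s)" .
    qed
    have ld: "\<forall>s\<in>S. 0 \<le> norm (a s) \<and> l * norm (a s) \<le> 1"
    proof
      fix s assume "s \<in> S"
      then have "norm (a s) \<le> \<sigma> + L" using aL \<sigma> by force
      then show "0 \<le> norm (a s) \<and> l * norm (a s) \<le> 1" using pos by (simp add: l_def field_simps)
    qed
    have mgf: "EB S p (\<lambda>c. exp (l * (h c - EB S p h))) \<le> exp (l^2 * (\<Sum>s\<in>S. p s * (norm (a s))^2))"
      by (rule mgf_bound[OF S p less_imp_le[OF l] ld bd])
    also have "\<dots> \<le> exp (l^2 * \<sigma>^2)" using aV by (intro exp_mono mult_left_mono) auto
    also have "\<dots> \<le> exp 1"
    proof -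
      have "l * \<sigma> \<le> 1" using pos L by (simp add: l_def field_simps)
      moreover have "0 \<le> l * \<sigma>" using l \<sigma> by simp
      ultimately have "(l * \<sigma>)^2 \<le> 1" by (simp add: power_le_one)
      then show ?thesis by (simp add: power_mult_distrib)
    qed
    finally have mgf2: "EB S p (\<lambda>c. exp (l * (h c - EB S p h))) \<le> exp 1" .
    have Eh: "EB S p h \<le> \<sigma>"
    proof -
      have "(EB S p h)^2 \<le> EB S p (\<lambda>c. (h c)^2)" by (rule Ex_sq_le[OF p S])
      also have "\<dots> = (\<Sum>s\<in>S. p s * (1 - p s) * (norm (a s))^2)"
        using second_moment[OF S, of p 0 a] by (simp add: h_def)
      also have "\<dots> \<le> (\<Sum>s\<in>S. p s * (norm (a s))^2)"
        using p by (intro sum_mono) (auto intro!: mult_right_mono mult_left_le)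
      also have "\<dots> \<le> \<sigma>^2" by (rule aV)
      finally have "(EB S p h)^2 \<le> \<sigma>^2" .
      then show ?thesis using \<sigma> by (rule power2_le_imp_le)
    qed
    have "EB S p (\<lambda>c. if T < h c then 1 else 0) \<le> EB S p (\<lambda>c. exp (- (l * (T - \<sigma>))) * exp (l * (h c - EB S p h)))"
    proof (rule Ex_mono[OF p])
      fix c
      show "(if T < h c then 1 else 0) \<le> exp (- (l * (T - \<sigma>))) * exp (l * (h c - EB S p h))"
      proof (cases "T < h c")
        case True
        then have "0 \<le> l * ((h c - EB S p h) - (T - \<sigma>))"
          using Eh l by (intro mult_nonneg_nonneg) auto
        then have "0 \<le> l * (h c - EB S p h) - l * (T - \<sigma>)" by (simp add: right_diff_distrib)
        then have "1 \<le> exp (l * (h c - EB S p h) - l * (T - \<sigma>))" by simp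
        moreover have "exp (- (l * (T - \<sigma>))) * exp (l * (h c - EB S p h)) = exp (l * (h c - EB S p h) - l * (T - \<sigma>))"
          by (simp add: exp_add[symmetric])
        ultimately show ?thesis using True by simp
      qed simp
    qed
    also have "\<dots> = exp (- (l * (T - \<sigma>))) * EB S p (\<lambda>c. exp (l * (h c - EB S p h)))" by (rule Ex_cmult)
    also have "\<dots> \<le> exp (- (l * (T - \<sigma>))) * exp 1" using mgf2 by (intro mult_left_mono) auto
    also have "\<dots> \<le> exp (2 - 32 * ln N)"
    proof -
      have "32 * ln N * (\<sigma> + L) \<le> T" unfolding T_def using \<sigma> L lnN by (simp add: algebra_simps)
      then have "32 * ln N \<le> l * T" using pos by (simp add: l_def field_simps)
      moreover have "l * \<sigma> \<le> 1" using pos L by (simp add: l_def field_simps)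
      ultimately have "- (l * (T - \<sigma>)) + 1 \<le> 2 - 32 * ln N" by (simp add: algebra_simps)
      then show ?thesis by (simp add: exp_add[symmetric])
    qed
    also have "\<dots> \<le> 1 / N^3" by (rule final_num[OF N])
    finally show ?thesis by (simp add: h_def T_def)
  qed
qed



lemma row_le_2inf: "norm (A $ j) \<le> norm_2inf (A :: real^'c^'r)"
  unfolding norm_2inf_def by (rule Max_ge) auto

lemma row_mult_eq: "(A ** P) $ j = transpose P *v (A $ j)"
  for A :: "real^'m^'n" and P :: "real^'k^'m"
  by (simp add: vec_eq_iff matrix_matrix_mult_def matrix_vector_mult_def transpose_def mult.commute)

lemma norm_orth_transpose:
  fixes P :: "real^'n^'n"
  assumes "orthogonal_matrix P"
  shows "norm (transpose P *v v) = norm v"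
proof -
  have e: "transpose P *v v = v v* P" by simp
  have "(v v* P) \<bullet> (transpose P *v v) = v \<bullet> (P *v (transpose P *v v))" by (rule dot_lmul_matrix)
  also have "\<dots> = v \<bullet> v" using assms
    by (simp del: transpose_matrix_vector add: matrix_vector_mul_assoc orthogonal_matrix_def)
  finally have "(transpose P *v v) \<bullet> (transpose P *v v) = v \<bullet> v" by (subst (1) e)
  then show ?thesis by (metis norm_eq_sqrt_inner)
qed

lemma row_mult_orth:
  fixes A :: "real^'n^'m" and P :: "real^'n^'n"
  assumes "orthogonal_matrix P"
  shows "norm ((A ** P) $ j) = norm (A $ j)"
  by (simp only: row_mult_eq norm_orth_transpose[OF assms])

lemma norm_sq_vec: "(norm (v :: real^'n))^2 = (\<Sum>i\<in>UNIV. (v $ i)^2)"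
  unfolding power2_norm_eq_inner inner_vec_def by (simp add: power2_eq_square)

lemma norm_F_sq: "(norm_F X)^2 = (\<Sum>j\<in>UNIV. (norm (X $ j))^2)"
  unfolding norm_F_def norm_sq_vec
  by (subst real_sqrt_pow2) (auto intro!: sum_nonneg)

lemma inner_transpose: "(transpose A *v w) \<bullet> u = w \<bullet> (A *v u)"
  for A :: "real^'c^'r"
  by (simp only: transpose_matrix_vector dot_lmul_matrix)

lemma mean_bound:
  fixes A :: "real^'c^'r" and w :: "real^'r"
  shows "norm (\<Sum>j\<in>UNIV. (w $ j) *\<^sub>R (A $ j)) \<le> norm_spec A * norm w"
proof -
  define u where "u = transpose A *v w"
  have u: "(\<Sum>j\<in>UNIV. (w $ j) *\<^sub>R (A $ j)) = u"
    by (simp add: u_def vec_eq_iff matrix_vector_mult_def transpose_def mult.commute)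
  have "(norm u)^2 = u \<bullet> u" by (simp add: power2_norm_eq_inner)
  also have "\<dots> = w \<bullet> (A *v u)" unfolding u_def by (rule inner_transpose)
  also have "\<dots> \<le> norm w * norm (A *v u)" by (rule Cauchy_Schwarz_ineq2[THEN order_trans[OF abs_ge_self]])
  also have "\<dots> \<le> norm w * (norm_spec A * norm u)"
    unfolding norm_spec_def by (intro mult_left_mono onorm) auto
  finally have *: "norm u * norm u \<le> (norm_spec A * norm w) * norm u"
    by (simp add: power2_eq_square algebra_simps)
  show ?thesis
  proof (cases "norm u = 0")
    case True then show ?thesis
      using onorm_pos_le[of "\<lambda>v. A *v v"] by (simp add: u norm_spec_def)
  next
    case False then show ?thesis using * by (simp add: u)
  qed
qed



lemma sum_row:
  fixes c q :: "'n \<times> 'p::finite \<Rightarrow> real" and f :: "'p \<Rightarrow> 'v::real_vector"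
  assumes "finite N" "i \<in> N"
  shows "(\<Sum>s\<in>N \<times> UNIV. (c s - q s) *\<^sub>R (if fst s = i then f (snd s) else 0))
       = (\<Sum>j\<in>UNIV. (c (i,j) - q (i,j)) *\<^sub>R f j)"
proof -
  have "(\<Sum>s\<in>N \<times> UNIV. (c s - q s) *\<^sub>R (if fst s = i then f (snd s) else 0))
     = (\<Sum>i'\<in>N. \<Sum>j\<in>UNIV. (c (i',j) - q (i',j)) *\<^sub>R (if i' = i then f j else 0))"
    by (subst sum.cartesian_product) (auto intro!: sum.cong)
  also have "\<dots> = (\<Sum>i'\<in>N. if i' = i then (\<Sum>j\<in>UNIV. (c (i',j) - q (i',j)) *\<^sub>R f j) else 0)"
    by (intro sum.cong refl) auto
  also have "\<dots> = (\<Sum>j\<in>UNIV. (c (i,j) - q (i,j)) *\<^sub>R f j)"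
    using assms by (simp add: sum.delta)
  finally show ?thesis .
qed

lemma sum_row2:
  fixes q :: "'n \<times> 'p::finite \<Rightarrow> real" and f :: "'p \<Rightarrow> real"
  assumes "finite N" "i \<in> N"
  shows "(\<Sum>s\<in>N \<times> UNIV. q s * (if fst s = i then f (snd s) else 0))
       = (\<Sum>j\<in>UNIV. q (i,j) * f j)"
proof -
  have "(\<Sum>s\<in>N \<times> UNIV. q s * (if fst s = i then f (snd s) else 0))
     = (\<Sum>i'\<in>N. \<Sum>j\<in>UNIV. q (i',j) * (if i' = i then f j else 0))"
    by (subst sum.cartesian_product) (auto intro!: sum.cong)
  also have "\<dots> = (\<Sum>i'\<in>N. if i' = i then (\<Sum>j\<in>UNIV. q (i',j) * f j) else 0)"
    by (intro sum.cong refl) auto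
  also have "\<dots> = (\<Sum>j\<in>UNIV. q (i,j) * f j)"
    using assms by (simp add: sum.delta)
  finally show ?thesis .
qed

lemma kappa_facts:
  fixes b2 :: "real \<Rightarrow> real"
  assumes "continuous_on UNIV b2" "\<bar>x\<bar> \<le> \<alpha>"
  shows "b2 x \<le> kappa2 b2 \<alpha>"
proof -
  have eq: "{x. \<bar>x\<bar> \<le> \<alpha>} = cball (0::real) \<alpha>" by (auto simp: cball_def dist_real_def)
  have "compact (b2 ` cball 0 \<alpha>)"
    by (rule compact_continuous_image) (auto intro: continuous_on_subset[OF assms(1)])
  then have "bdd_above (b2 ` cball 0 \<alpha>)" by (intro bounded_imp_bdd_above compact_imp_bounded)
  then show ?thesis unfolding kappa2_def eq using assms(2)
    by (intro cSup_upper) (auto simp: dist_real_def)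
qed

lemma cont_row_mult:
  fixes B :: "real^'m^'n" and f :: "'z::topological_space \<Rightarrow> real^'k^'m"
  assumes "continuous_on UNIV f"
  shows "continuous_on UNIV (\<lambda>z. (B ** f z) $ j)"
  unfolding matrix_matrix_mult_def
  by (simp, intro continuous_intros assms)

lemma cont_mult:
  fixes B :: "real^'m^'n" and f :: "'z::topological_space \<Rightarrow> real^'k^'m"
  assumes "continuous_on UNIV f"
  shows "continuous_on UNIV (\<lambda>z. B ** f z)"
  unfolding matrix_matrix_mult_def
  by (intro continuous_intros assms)

lemma cont_gg:
  fixes V :: "real^'r^'p" and Y :: "real^'r^'n"
  shows "continuous_on UNIV (\<lambda>z::(real^'r^'p) \<times> (real^'r^'r).
     (c * ((fst z $ j - (V ** snd z) $ j) \<bullet> ((Y ** snd z) $ i))) *\<^sub>R (fst z $ j))"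
  by (intro continuous_intros cont_row_mult continuous_on_snd continuous_on_fst continuous_on_id)

lemma cont_F:
  fixes V :: "real^'r^'p"
  shows "continuous_on UNIV (\<lambda>z::(real^'r^'p) \<times> (real^'r^'r). norm_F (fst z - V ** snd z))"
  unfolding norm_F_def
  by (intro continuous_intros cont_mult continuous_on_snd continuous_on_fst continuous_on_id)



theorem mainTheorem13:
  fixes b b1 b2 :: "real \<Rightarrow> real"
    and Mst :: "real^'p::finite^'n::finite"
    and U :: "real^'r::finite^'n" and D :: "real^'r^'r" and V :: "real^'r^'p"
    and M :: "'a measure"
    and \<omega> :: "'n \<Rightarrow> 'p \<Rightarrow> 'a \<Rightarrow> real" and \<pi> :: "'n \<Rightarrow> 'p \<Rightarrow> real"
    and N2 :: "'n set"
    and Ahat :: "'a \<Rightarrow> real^'r^'p" and Phat :: "'a \<Rightarrow> real^'r^'r"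
    and C1 C2 :: real
  assumes b1: "\<And>x. (b has_real_derivative b1 x) (at x)"
    and b2: "\<And>x. (b1 has_real_derivative b2 x) (at x)"
    and b2_cont: "continuous_on UNIV b2"
    and b2_pos: "\<And>x. b2 x > 0"
    and rank: "rank Mst = CARD('r)"
    and svd: "Mst = U ** D ** transpose V"
    and U_orth: "transpose U ** U = mat 1"
    and V_orth: "transpose V ** V = mat 1"
    and D_diag: "\<And>i j. i \<noteq> j \<Longrightarrow> D $ i $ j = 0"
    and D_pos: "\<And>i. D $ i $ i > 0"
    and n_ge: "CARD('n) \<ge> 4"
    and r_le: "CARD('r) \<le> CARD('n)"
    and P: "prob_space M"
    and \<omega>_meas: "\<And>i j. \<omega> i j \<in> borel_measurable M"
    and \<omega>_01: "\<And>i j x. x \<in> space M \<Longrightarrow> \<omega> i j x \<in> {0, 1}"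
    and \<omega>_prob: "\<And>i j. measure M {x \<in> space M. \<omega> i j x = 1} = \<pi> i j"
    and \<omega>_indep: "prob_space.indep_vars M (\<lambda>_. borel) (\<lambda>(i, j). \<omega> i j) UNIV"
    and Ahat_meas: "Ahat \<in> borel_measurable M"
    and Phat_meas: "Phat \<in> borel_measurable M"
    and Phat_orth: "\<And>x. x \<in> space M \<Longrightarrow> orthogonal_matrix (Phat x)"
    and indep: "\<And>A B. A \<in> sets (borel :: ((real^'r^'p) \<times> (real^'r^'r)) measure) \<Longrightarrow>
                   B \<in> sets (PiM (N2 \<times> UNIV) (\<lambda>_. borel :: real measure)) \<Longrightarrow>
       measure M {x \<in> space M. (Ahat x, Phat x) \<in> A \<and> (\<lambda>ij\<in>N2 \<times> UNIV. \<omega> (fst ij) (snd ij) x) \<in> B}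
       = measure M {x \<in> space M. (Ahat x, Phat x) \<in> A}
         * measure M {x \<in> space M. (\<lambda>ij\<in>N2 \<times> UNIV. \<omega> (fst ij) (snd ij) x) \<in> B}"
    and Ahat_bd: "\<And>x. x \<in> space M \<Longrightarrow> norm_2inf (Ahat x) \<le> C2"
    and V_bd: "norm_2inf V \<le> C2"
    and UD_bd: "norm_2inf (U ** D) \<le> C1"
  shows "\<exists>E \<in> sets M. measure M E \<ge> 1 - 1 / (real CARD('n) * real CARD('r)) \<and>
    (\<forall>x \<in> E. \<forall>i \<in> N2.
      (let \<kappa> = kappa2 b2 (2 * norm_max Mst + 1);
           \<pi>max = Max (range (\<lambda>(i, j). \<pi> i j));
           Ast = V ** Phat x;
           Th = U ** D ** Phat x
       in norm (B1 b2 Mst (\<lambda>i j. \<omega> i j x) (Ahat x) Ast Th i)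
          \<le> \<kappa> * \<pi>max * C1 * norm_spec (Ahat x) * norm_F (Ahat x - Ast)
            + 64 * ln (real CARD('n)) * (sqrt \<pi>max * \<kappa> * C1 * C2 * norm_F (Ahat x - Ast)
                                          + \<kappa> * C1 * C2^2)))"
proof (cases "N2 = {}")
  case True
  interpret P: prob_space M by (rule P)
  show ?thesis
  proof (rule bexI[of _ "space M"], intro conjI)
    show "1 - 1 / (real CARD('n) * real CARD('r)) \<le> measure M (space M)"
      using P.prob_space by simp
  qed (auto simp: True)
next
  case N2ne: False
  interpret P: prob_space M by (rule P)
  define n where "n = real CARD('n)"
  define rr where "rr = real CARD('r)"
  define \<kappa> where "\<kappa> = kappa2 b2 (2 * norm_max Mst + 1)"
  define \<pi>max where "\<pi>max = Max (range (\<lambda>(i, j). \<pi> i j))"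
  have n4: "4 \<le> n" using n_ge by (simp add: n_def)
  have rn: "rr \<le> n" using r_le by (simp add: rr_def n_def)
  have r1: "1 \<le> rr" by (simp add: rr_def Suc_le_eq)
  have \<pi>01: "0 \<le> \<pi> i j \<and> \<pi> i j \<le> 1" for i j
    using \<omega>_prob[of i j] P.prob_le_1[of "{x \<in> space M. \<omega> i j x = 1}"]
      measure_nonneg[of M "{x \<in> space M. \<omega> i j x = 1}"] by auto
  have \<pi>max: "\<pi> i j \<le> \<pi>max" for i j
    unfolding \<pi>max_def by (rule Max_ge) auto
  have \<pi>max0: "0 \<le> \<pi>max" using \<pi>01 \<pi>max by (meson order_trans)
  have Mmax: "\<bar>Mst $ i $ j\<bar> \<le> norm_max Mst" for i j
    unfolding norm_max_def by (rule Max_ge) auto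
  have \<kappa>b: "b2 (Mst $ i $ j) \<le> \<kappa>" for i j
    unfolding \<kappa>_def
  proof (rule kappa_facts[OF b2_cont])
    have "0 \<le> norm_max Mst" using Mmax[of i j] by simp
    then show "\<bar>Mst $ i $ j\<bar> \<le> 2 * norm_max Mst + 1" using Mmax[of i j] by simp
  qed
  have \<kappa>0: "0 \<le> \<kappa>" using \<kappa>b[of undefined undefined] b2_pos[of "Mst $ undefined $ undefined"] by simp
  have C20: "0 \<le> C2" using row_le_2inf[of V undefined] V_bd by (meson norm_ge_zero order_trans)
  have C10: "0 \<le> C1" using row_le_2inf[of "U ** D" undefined] UD_bd by (meson norm_ge_zero order_trans)

  define Z where "Z = (\<lambda>x. (Ahat x, Phat x))"
  define gg where "gg = (\<lambda>i j (z::(real^'r^'p) \<times> (real^'r^'r)).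
     (b2 (Mst$i$j) * ((fst z $ j - (V ** snd z) $ j) \<bullet> ((U ** D ** snd z) $ i))) *\<^sub>R (fst z $ j))"
  define Fz where "Fz = (\<lambda>z::(real^'r^'p) \<times> (real^'r^'r). norm_F (fst z - V ** snd z))"
  define T where "T = (\<lambda>z. 64 * ln n * (sqrt \<pi>max * \<kappa> * C1 * C2 * Fz z + \<kappa> * C1 * C2^2))"
  define G where "G = (\<lambda>c::('n\<times>'p \<Rightarrow> real). {z. \<exists>i\<in>N2. T z < norm (\<Sum>j\<in>UNIV. (c (i,j) - \<pi> i j) *\<^sub>R gg i j z)})"
  define S where "S = N2 \<times> (UNIV::'p set)"
  define pp where "pp = (\<lambda>s::'n\<times>'p. \<pi> (fst s) (snd s))"
  define Cs where "Cs = PiE S (\<lambda>_. {0,1::real})"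
  define W where "W = (\<lambda>x. \<lambda>s\<in>S. \<omega> (fst s) (snd s) x)"
  define wc where "wc = (\<lambda>c. \<Prod>s\<in>S. wt (pp s) (c s))"
  define Bad where "Bad = (\<Union>c\<in>Cs. {x\<in>space M. Z x \<in> G c \<and> W x \<in> {c}})"
  define E where "E = space M - Bad"

  have finS: "finite S" by (simp add: S_def)
  have Sne: "S \<noteq> {}" using N2ne by (simp add: S_def)
  have finCs: "finite Cs" unfolding Cs_def using finS by (intro finite_PiE) auto
  have pp01: "\<forall>s\<in>S. 0 \<le> pp s \<and> pp s \<le> 1" using \<pi>01 by (simp add: pp_def)

  have rowA: "norm (Ahat x $ j) \<le> C2" if "x \<in> space M" for x j
    using row_le_2inf[of "Ahat x" j] Ahat_bd[OF that] by simp
  have rowAst: "norm ((V ** Phat x) $ j) \<le> C2" if "x \<in> space M" for x j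
    using row_mult_orth[OF Phat_orth[OF that], of V j] row_le_2inf[of V j] V_bd by simp
  have rowTh: "norm ((U ** D ** Phat x) $ i) \<le> C1" if "x \<in> space M" for x i
    using row_mult_orth[OF Phat_orth[OF that], of "U ** D" i] row_le_2inf[of "U ** D" i] UD_bd by simp
  have dnorm: "norm (Ahat x $ j - (V ** Phat x) $ j) \<le> 2 * C2" if "x \<in> space M" for x j
    using norm_triangle_ineq4[of "Ahat x $ j" "(V ** Phat x) $ j"] rowA[OF that, of j] rowAst[OF that, of j] by simp
  have dtheta: "\<bar>(Ahat x $ j - (V ** Phat x) $ j) \<bullet> ((U ** D ** Phat x) $ i)\<bar> \<le> norm (Ahat x $ j - (V ** Phat x) $ j) * C1"
    if "x \<in> space M" for x i j
    using Cauchy_Schwarz_ineq2[of "Ahat x $ j - (V ** Phat x) $ j" "(U ** D ** Phat x) $ i"] rowTh[OF that, of i]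
    by (meson mult_left_mono norm_ge_zero order_trans)
  have ggb: "norm (gg i j (Z x)) \<le> \<kappa> * C1 * C2 * norm (Ahat x $ j - (V ** Phat x) $ j)"
    if "x \<in> space M" for x i j
  proof -
    have "norm (gg i j (Z x)) = b2 (Mst$i$j) * \<bar>(Ahat x $ j - (V ** Phat x) $ j) \<bullet> ((U ** D ** Phat x) $ i)\<bar> * norm (Ahat x $ j)"
      using b2_pos[of "Mst$i$j"] by (simp add: gg_def Z_def abs_mult)
    also have "\<dots> \<le> \<kappa> * (norm (Ahat x $ j - (V ** Phat x) $ j) * C1) * C2"
      using \<kappa>b[of i j] b2_pos[of "Mst$i$j"] dtheta[OF that, of j i] rowA[OF that, of j] \<kappa>0
      by (intro mult_mono) auto
    finally show ?thesis by (simp add: algebra_simps)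
  qed
  have Fsq: "(Fz (Z x))^2 = (\<Sum>j\<in>UNIV. (norm (Ahat x $ j - (V ** Phat x) $ j))^2)" for x
    by (simp add: Fz_def Z_def norm_F_sq)
  have Fz0: "0 \<le> Fz z" for z by (auto simp: Fz_def norm_F_def intro!: sum_nonneg)

  have rowtail: "EB S pp (\<lambda>c. if T (Z x) < norm (\<Sum>j\<in>UNIV. (c (i,j) - \<pi> i j) *\<^sub>R gg i j (Z x)) then 1 else 0) \<le> 1 / n^3"
    if x: "x \<in> space M" and i: "i \<in> N2" for x i
  proof -
    define a where "a = (\<lambda>s::'n\<times>'p. if fst s = i then gg i (snd s) (Z x) else 0)"
    define \<sigma> where "\<sigma> = sqrt \<pi>max * \<kappa> * C1 * C2 * Fz (Z x)"
    define L where "L = 2 * \<kappa> * C1 * C2^2"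
    have sumeq: "(\<Sum>s\<in>S. (c s - pp s) *\<^sub>R a s) = (\<Sum>j\<in>UNIV. (c (i,j) - \<pi> i j) *\<^sub>R gg i j (Z x))" for c
      unfolding S_def a_def using sum_row[of N2 i c pp "\<lambda>j. gg i j (Z x)"] i by (simp add: pp_def)
    have Teq: "64 * ln n * (\<sigma> + L/2) = T (Z x)" by (simp add: T_def \<sigma>_def L_def)
    have aL: "\<forall>s\<in>S. norm (a s) \<le> L"
    proof
      fix s assume "s \<in> S"
      have L0: "0 \<le> L" using \<kappa>0 C10 C20 by (simp add: L_def)
      show "norm (a s) \<le> L"
      proof (cases "fst s = i")
        case True
        have "norm (gg i (snd s) (Z x)) \<le> \<kappa> * C1 * C2 * (2 * C2)"
          using ggb[OF x, of i "snd s"] dnorm[OF x, of "snd s"] \<kappa>0 C10 C20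
          by (meson mult_left_mono mult_nonneg_nonneg order_trans)
        then show ?thesis using True by (simp add: a_def L_def power2_eq_square algebra_simps)
      qed (simp add: a_def L0)
    qed
    have aV: "(\<Sum>s\<in>S. pp s * (norm (a s))^2) \<le> \<sigma>^2"
    proof -
      have "(\<Sum>s\<in>S. pp s * (norm (a s))^2) = (\<Sum>s\<in>S. pp s * (if fst s = i then (norm (gg i (snd s) (Z x)))^2 else 0))"
        by (intro sum.cong refl) (simp add: a_def)
      also have "\<dots> = (\<Sum>j\<in>UNIV. pp (i,j) * (norm (gg i j (Z x)))^2)"
        unfolding S_def by (rule sum_row2[OF _ i]) simp
      also have "\<dots> \<le> (\<Sum>j\<in>UNIV. \<pi>max * ((\<kappa> * C1 * C2)^2 * (norm (Ahat x $ j - (V ** Phat x) $ j))^2))"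
      proof (intro sum_mono mult_mono)
        fix j
        show "pp (i, j) \<le> \<pi>max" using \<pi>max by (simp add: pp_def)
        have "norm (gg i j (Z x)) \<le> \<kappa> * C1 * C2 * norm (Ahat x $ j - (V ** Phat x) $ j)" by (rule ggb[OF x])
        then have "(norm (gg i j (Z x)))^2 \<le> (\<kappa> * C1 * C2 * norm (Ahat x $ j - (V ** Phat x) $ j))^2"
          by (intro power_mono) auto
        then show "(norm (gg i j (Z x)))^2 \<le> (\<kappa> * C1 * C2)^2 * (norm (Ahat x $ j - (V ** Phat x) $ j))^2"
          by (simp add: power_mult_distrib)
      qed (use \<pi>max0 \<pi>01 in \<open>auto simp: pp_def\<close>)
      also have "\<dots> = \<pi>max * (\<kappa> * C1 * C2)^2 * (Fz (Z x))^2"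
        by (simp add: Fsq sum_distrib_left mult.assoc)
      also have "\<dots> = \<sigma>^2" using \<pi>max0 by (simp add: \<sigma>_def power_mult_distrib)
      finally show ?thesis .
    qed
    have \<sigma>0: "0 \<le> \<sigma>" using \<pi>max0 \<kappa>0 C10 C20 Fz0 by (simp add: \<sigma>_def)
    have L0: "0 \<le> L" using \<kappa>0 C10 C20 by (simp add: L_def)
    have "EB S pp (\<lambda>c. if 64 * ln n * (\<sigma> + L/2) < norm (\<Sum>s\<in>S. (c s - pp s) *\<^sub>R a s) then 1 else 0) \<le> 1 / n^3"
      by (rule tail_bound[OF finS pp01 aL aV \<sigma>0 L0 n4])
    then show ?thesis by (simp only: sumeq Teq)
  qed

  have pointwise: "(\<Sum>c\<in>Cs. wc c * indicator (G c) (Z x)) \<le> 1 / (n * rr)" if x: "x \<in> space M" for x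
  proof -
    define f where "f = (\<lambda>i c. if T (Z x) < norm (\<Sum>j\<in>UNIV. (c (i,j) - \<pi> i j) *\<^sub>R gg i j (Z x)) then 1 else (0::real))"
    have wc0: "0 \<le> wc c" for c unfolding wc_def using pp01
      by (intro prod_nonneg) (auto intro: wt_nonneg)
    have ind: "indicator (G c) (Z x) \<le> (\<Sum>i\<in>N2. f i c)" for c
    proof (cases "Z x \<in> G c")
      case True
      then obtain i where i: "i \<in> N2" "f i c = 1" by (auto simp: G_def f_def)
      have "f i c \<le> (\<Sum>i\<in>N2. f i c)"
        using i finite by (intro member_le_sum) (auto simp: f_def)
      then show ?thesis using True i by simp
    next
      case False then show ?thesis by (simp add: sum_nonneg f_def)
    qed
    have "(\<Sum>c\<in>Cs. wc c * indicator (G c) (Z x)) \<le> (\<Sum>c\<in>Cs. wc c * (\<Sum>i\<in>N2. f i c))"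
      by (intro sum_mono mult_left_mono ind wc0)
    also have "\<dots> = (\<Sum>i\<in>N2. EB S pp (f i))"
      unfolding EB_def Cs_def wc_def by (simp add: sum_distrib_left) (rule sum.swap)
    also have "\<dots> \<le> (\<Sum>i\<in>N2. 1 / n^3)"
      by (intro sum_mono) (unfold f_def, rule rowtail[OF x])
    also have "\<dots> = card N2 / n^3" by simp
    also have "\<dots> \<le> n / n^3"
    proof -
      have "real (card N2) \<le> n" unfolding n_def by (simp add: card_mono)
      then show ?thesis using n4 by (intro divide_right_mono) auto
    qed
    also have "\<dots> \<le> 1 / (n * rr)"
      using n4 rn r1 by (simp add: field_simps power3_eq_cube mult_left_mono)
    finally show ?thesis .
  qed
  have Zm: "Z \<in> borel_measurable M"
    using measurable_Pair[OF Ahat_meas Phat_meas] by (simp add: Z_def borel_prod)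
  have Wm: "W \<in> measurable M (PiM S (\<lambda>_. borel))"
    unfolding W_def by (intro measurable_restrict) (simp add: \<omega>_meas)
  have Gopen: "open (G c)" for c
  proof -
    have "G c = (\<Union>i\<in>N2. {z. T z < norm (\<Sum>j\<in>UNIV. (c (i,j) - \<pi> i j) *\<^sub>R gg i j z)})"
      by (auto simp: G_def)
    moreover have "open {z. T z < norm (\<Sum>j\<in>UNIV. (c (i,j) - \<pi> i j) *\<^sub>R gg i j z)}" for i
      unfolding T_def gg_def Fz_def
      by (intro open_Collect_less continuous_intros cont_gg cont_F)
    ultimately show ?thesis by auto
  qed
  have Gsets: "G c \<in> sets borel" for c using Gopen by simp
  have csing: "{c} = PiE S (\<lambda>s. {c s})" if "c \<in> Cs" for c
  proof (intro set_eqI iffI)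
    fix f assume "f \<in> {c}" then show "f \<in> PiE S (\<lambda>s. {c s})"
      using that by (auto simp: Cs_def PiE_def extensional_def)
  next
    fix f assume f: "f \<in> PiE S (\<lambda>s. {c s})"
    have "f = c"
    proof
      fix s show "f s = c s"
      proof (cases "s \<in> S")
        case True then show ?thesis using f by (auto simp: PiE_def)
      next
        case False then show ?thesis using f that PiE_arb[of f S _ s] PiE_arb[of c S _ s] by (auto simp: Cs_def)
      qed
    qed
    then show "f \<in> {c}" by simp
  qed
  have csets: "{c} \<in> sets (PiM S (\<lambda>_. borel :: real measure))" if "c \<in> Cs" for c
    unfolding csing[OF that] using finS by (intro sets_PiM_I_finite) auto
  have ZGsets: "{x\<in>space M. Z x \<in> G c} \<in> sets M" for c
    using measurable_sets[OF Zm Gsets[of c]] by (simp add: vimage_def Int_def conj_commute)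
  have Wsets: "{x\<in>space M. W x \<in> {c}} \<in> sets M" if "c \<in> Cs" for c
    using measurable_sets[OF Wm csets[OF that]] by (simp add: vimage_def Int_def conj_commute)
  have ZWsets: "{x\<in>space M. Z x \<in> G c \<and> W x \<in> {c}} \<in> sets M" if "c \<in> Cs" for c
  proof -
    have "{x\<in>space M. Z x \<in> G c \<and> W x \<in> {c}} = {x\<in>space M. Z x \<in> G c} \<inter> {x\<in>space M. W x \<in> {c}}" by auto
    then show ?thesis using ZGsets Wsets[OF that] by auto
  qed
  have Badsets: "Bad \<in> sets M"
    unfolding Bad_def using finCs ZWsets by (intro sets.finite_UN) auto

  have ev1: "{x\<in>space M. \<omega> i j x = 1} \<in> sets M" for i j
    using measurable_sets[OF \<omega>_meas[of i j], of "{1}"] by (simp add: vimage_def Int_def conj_commute)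
  have Wlaw: "P.prob {x\<in>space M. W x \<in> {c}} = wc c" if c: "c \<in> Cs" for c
  proof -
    define X where "X = (\<lambda>s::'n\<times>'p. case s of (i, j) \<Rightarrow> \<omega> i j)"
    have eq: "{x\<in>space M. W x \<in> {c}} = (\<Inter>s\<in>S. X s -` {c s} \<inter> space M)"
    proof (intro set_eqI iffI)
      fix x assume "x \<in> {x\<in>space M. W x \<in> {c}}"
      then show "x \<in> (\<Inter>s\<in>S. X s -` {c s} \<inter> space M)"
        by (auto simp: W_def X_def split: prod.splits dest: fun_cong)
    next
      fix x assume x: "x \<in> (\<Inter>s\<in>S. X s -` {c s} \<inter> space M)"
      then have xs: "x \<in> space M" using Sne by auto
      have "W x = c"
      proof
        fix s show "W x s = c s"
        proof (cases "s \<in> S")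
          case True
          then have "x \<in> X s -` {c s}" using x by blast
          then show ?thesis using True by (auto simp: W_def X_def split: prod.splits)
        next
          case False then show ?thesis using c PiE_arb[of c S _ s] by (simp add: W_def Cs_def)
        qed
      qed
      then show "x \<in> {x\<in>space M. W x \<in> {c}}" using xs by simp
    qed
    have "P.prob (\<Inter>s\<in>S. X s -` {c s} \<inter> space M) = (\<Prod>s\<in>S. P.prob (X s -` {c s} \<inter> space M))"
      using \<omega>_indep unfolding X_def
      by (intro P.indep_varsD[where M'="\<lambda>_. borel"]) (auto simp: Sne finS case_prod_beta')
    also have "\<dots> = wc c"
      unfolding wc_def
    proof (intro prod.cong refl)
      fix s assume s: "s \<in> S"
      obtain i j where ij: "s = (i,j)" by (cases s)
      have cs: "c s = 0 \<or> c s = 1" using c s by (auto simp: Cs_def PiE_def)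
      show "P.prob (X s -` {c s} \<inter> space M) = wt (pp s) (c s)"
      proof (cases "c s = 1")
        case True
        have "X s -` {c s} \<inter> space M = {x\<in>space M. \<omega> i j x = 1}" using True ij by (auto simp: X_def)
        then show ?thesis using True ij \<omega>_prob[of i j] by (simp add: wt_def pp_def)
      next
        case False
        then have c0: "c s = 0" using cs by auto
        have "X s -` {c s} \<inter> space M = space M - {x\<in>space M. \<omega> i j x = 1}"
          using c0 ij \<omega>_01[of _ i j] by (auto simp: X_def)
        then show ?thesis using c0 ij \<omega>_prob[of i j] P.prob_compl[OF ev1[of i j]]
          by (simp add: wt_def pp_def)
      qed
    qed
    finally show ?thesis using eq by simp
  qed

  have factor: "P.prob {x\<in>space M. Z x \<in> G c \<and> W x \<in> {c}} = P.prob {x\<in>space M. Z x \<in> G c} * wc c"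
    if c: "c \<in> Cs" for c
    using indep[OF Gsets[of c] csets[OF c, unfolded S_def]] Wlaw[OF c]
    by (simp add: Z_def W_def S_def)
  have integ: "P.prob {x\<in>space M. Z x \<in> G c} = integral\<^sup>L M (\<lambda>x. indicator (G c) (Z x))" for c
  proof -
    have "integral\<^sup>L M (\<lambda>x. indicator (G c) (Z x)) = integral\<^sup>L M (indicator {x\<in>space M. Z x \<in> G c})"
      by (intro Bochner_Integration.integral_cong) (auto simp: indicator_def)
    also have "\<dots> = P.prob {x\<in>space M. Z x \<in> G c}"
      by (simp add: Int_absorb2 subsetI)
    finally show ?thesis by simp
  qed
  have indm: "(\<lambda>x. indicator (G c) (Z x) :: real) \<in> borel_measurable M" for c
    by (rule measurable_compose[OF Zm borel_measurable_indicator[OF Gsets[of c]]])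
  have indint: "integrable M (\<lambda>x. indicator (G c) (Z x) :: real)" for c
    by (rule P.integrable_const_bound[where B=1, OF _ indm]) (auto simp: indicator_def)
  have probBad: "P.prob Bad \<le> 1 / (n * rr)"
  proof -
    have "P.prob Bad \<le> (\<Sum>c\<in>Cs. P.prob {x\<in>space M. Z x \<in> G c \<and> W x \<in> {c}})"
      unfolding Bad_def using finCs ZWsets by (intro P.finite_measure_subadditive_finite) auto
    also have "\<dots> = (\<Sum>c\<in>Cs. wc c * integral\<^sup>L M (\<lambda>x. indicator (G c) (Z x)))"
    proof (intro sum.cong refl)
      fix c assume "c \<in> Cs"
      then show "P.prob {x\<in>space M. Z x \<in> G c \<and> W x \<in> {c}} = wc c * integral\<^sup>L M (\<lambda>x. indicator (G c) (Z x))"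
        by (simp only: factor integ mult.commute)
    qed
    also have "\<dots> = integral\<^sup>L M (\<lambda>x. \<Sum>c\<in>Cs. wc c * indicator (G c) (Z x))"
      using indint by (subst Bochner_Integration.integral_sum) auto
    also have "\<dots> \<le> integral\<^sup>L M (\<lambda>x. 1 / (n * rr))"
      using indint pointwise by (intro integral_mono) auto
    also have "\<dots> = 1 / (n * rr)" using P.prob_space by simp
    finally show ?thesis .
  qed
  have Esets: "E \<in> sets M" unfolding E_def using Badsets by auto
  have Emeas: "1 - 1 / (real CARD('n) * real CARD('r)) \<le> measure M E"
    using P.prob_compl[OF Badsets] probBad by (simp add: E_def n_def rr_def)

  have onE: "norm (B1 b2 Mst (\<lambda>i j. \<omega> i j x) (Ahat x) (V ** Phat x) (U ** D ** Phat x) i)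
      \<le> \<kappa> * \<pi>max * C1 * norm_spec (Ahat x) * norm_F (Ahat x - V ** Phat x)
        + 64 * ln (real CARD('n)) * (sqrt \<pi>max * \<kappa> * C1 * C2 * norm_F (Ahat x - V ** Phat x) + \<kappa> * C1 * C2^2)"
    if xE: "x \<in> E" and i: "i \<in> N2" for x i
  proof -
    have x: "x \<in> space M" using xE by (simp add: E_def)
    have WC: "W x \<in> Cs" using x \<omega>_01 by (auto simp: W_def Cs_def)
    have "x \<notin> {x\<in>space M. Z x \<in> G (W x) \<and> W x \<in> {W x}}" using xE WC by (auto simp: E_def Bad_def)
    then have "Z x \<notin> G (W x)" using x by simp
    then have fl: "norm (\<Sum>j\<in>UNIV. (\<omega> i j x - \<pi> i j) *\<^sub>R gg i j (Z x)) \<le> T (Z x)"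
      using i by (auto simp: G_def W_def S_def not_less)
    define d where "d = (\<lambda>j. Ahat x $ j - (V ** Phat x) $ j)"
    define th where "th = (U ** D ** Phat x) $ i"
    define w where "w = (\<chi> j. \<pi> i j * b2 (Mst$i$j) * (d j \<bullet> th))"
    have split: "B1 b2 Mst (\<lambda>i j. \<omega> i j x) (Ahat x) (V ** Phat x) (U ** D ** Phat x) i
       = (\<Sum>j\<in>UNIV. (w $ j) *\<^sub>R (Ahat x $ j)) + (\<Sum>j\<in>UNIV. (\<omega> i j x - \<pi> i j) *\<^sub>R gg i j (Z x))"
      unfolding B1_def sum.distrib[symmetric]
      by (intro sum.cong refl) (simp add: w_def gg_def Z_def d_def th_def algebra_simps)
    have wb: "norm w \<le> \<pi>max * \<kappa> * C1 * Fz (Z x)"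
    proof (rule power2_le_imp_le)
      have "(norm w)^2 = (\<Sum>j\<in>UNIV. (w $ j)^2)" by (rule norm_sq_vec)
      also have "\<dots> \<le> (\<Sum>j\<in>UNIV. (\<pi>max * \<kappa> * C1)^2 * (norm (d j))^2)"
      proof (intro sum_mono)
        fix j
        have "\<bar>w $ j\<bar> = \<pi> i j * b2 (Mst$i$j) * \<bar>d j \<bullet> th\<bar>"
          using \<pi>01[of i j] b2_pos[of "Mst$i$j"] by (simp add: w_def abs_mult)
        also have "\<dots> \<le> \<pi>max * \<kappa> * (norm (d j) * C1)"
          using \<pi>max[of i j] \<pi>01[of i j] \<kappa>b[of i j] b2_pos[of "Mst$i$j"] dtheta[OF x, of j i] \<pi>max0 \<kappa>0
          unfolding d_def th_def by (intro mult_mono) auto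
        finally have "\<bar>w $ j\<bar> \<le> \<pi>max * \<kappa> * C1 * norm (d j)" by (simp add: algebra_simps)
        then have "\<bar>w $ j\<bar>^2 \<le> (\<pi>max * \<kappa> * C1 * norm (d j))^2" by (intro power_mono) auto
        then show "(w $ j)^2 \<le> (\<pi>max * \<kappa> * C1)^2 * (norm (d j))^2" by (simp add: power_mult_distrib)
      qed
      also have "\<dots> = (\<pi>max * \<kappa> * C1 * Fz (Z x))^2"
        by (simp add: Fsq d_def sum_distrib_left[symmetric] power_mult_distrib)
      finally show "(norm w)^2 \<le> (\<pi>max * \<kappa> * C1 * Fz (Z x))^2" .
      show "0 \<le> \<pi>max * \<kappa> * C1 * Fz (Z x)" using \<pi>max0 \<kappa>0 C10 Fz0 by simp
    qed
    have ns: "0 \<le> norm_spec (Ahat x)" unfolding norm_spec_def by (rule onorm_pos_le) simp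
    have "norm (B1 b2 Mst (\<lambda>i j. \<omega> i j x) (Ahat x) (V ** Phat x) (U ** D ** Phat x) i)
       \<le> norm (\<Sum>j\<in>UNIV. (w $ j) *\<^sub>R (Ahat x $ j)) + norm (\<Sum>j\<in>UNIV. (\<omega> i j x - \<pi> i j) *\<^sub>R gg i j (Z x))"
      unfolding split by (rule norm_triangle_ineq)
    also have "\<dots> \<le> norm_spec (Ahat x) * (\<pi>max * \<kappa> * C1 * Fz (Z x)) + T (Z x)"
      using mean_bound[of w "Ahat x"] mult_left_mono[OF wb ns] fl by linarith
    finally show ?thesis by (simp add: T_def Fz_def Z_def n_def algebra_simps)
  qed
  show ?thesis
    unfolding Let_def \<kappa>_def[symmetric] \<pi>max_def[symmetric]
    using Esets Emeas onE by blast
qed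


end
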